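(* Let $R$ be a ring. Let $P$ be a polygon divided into subpolygons $P^1$ and $P^2$ by the dissection $\{(t,v),(v,t)\}$; let $V^\alpha$ be the vertex set of $P^\alpha$ and $U^\alpha=V^\alpha\setminus\{t,v\}$. Let $D^2$ be a dissection of $P^2$ and $D=\{(t,v),(v,t)\}\,\dot\cup\,D^2$. Let $c:\operatorname{diag}P\to R$ be a map with $c_{rs}\in R^*$ for all $(r,s)\in D$. Then for $i\in U^1$ and $k\in U^2$, \[ \sum_{p\in\mathscr{P}(D,i,k)}c_p=c_{it}c_{vt}^{-1}\sum_{q\in\mathscr{P}(D^2,v,k)}c_q+c_{iv}c_{tv}^{-1}\sum_{q\in\mathscr{P}(D^2,t,k)}c_q, \] and for $i\in U^2$ and $k\in U^1$, \[ \sum_{p\in\mathscr{P}(D,i,k)}c_p=\Big(\sum_{q\in\mathscr{P}(D^2,i,t)}c_q\Big)c_{vt}^{-1}c_{vk}+\Big(\sum_{q\in\mathscr{P}(D^2,i,v)}c_q\Big)c_{tv}^{-1}c_{tk}. \] Here $\mathscr{P}(D^2,\cdot,\cdot)$ refers to $T$-paths in the polygon $P^2$ with respect to $D^2$.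
   Context: $R^*$ denotes the invertible elements of $R$. A polygon is a finite set of at least three vertices with a cyclic ordering, thought of as a convex polygon in the plane; a subpolygon is a subset of at least three vertices with induced cyclic ordering. $\operatorname{diag}P$ is the set of ordered pairs of distinct vertices; internal diagonals are those whose endpoints are not neighbours. $(i,k)$ and $(j,\ell)$ cross if $i,j,k,\ell$ are pairwise distinct with $i<j<k<\ell$ or $i<\ell<k<j$ cyclically. A dissection is a set of internal diagonals closed under reversal with no two crossing; the pair $\{(t,v),(v,t)\}$ divides $P$ into the subpolygons $P^1,P^2$ whose vertex sets are the vertices on either side of $(t,v)$ together with $t,v$. Write $c_{ik}=c(i,k)$. For a polygon $Q$ with dissection $D$, a sequence $(p_1,\ldots,p_\pi)$ of vertices of $Q$ is a $T$-path from $p_1$ to $p_\pi$ with respect to $D$ if: $p_1\ne p_\pi$; the sets $\{p_\alpha,p_{\alpha+1}\}$ ($1\le\alpha<\pi$) are pairwise different 2-element sets; no $(p_\alpha,p_{\alpha+1})$ crosses a diagonal of $D$; each $(p_{2\alpha},p_{2\alpha+1})$ is in $D$ and crosses $(p_1,p_\pi)$, with the crossing points progressing monotonically from $p_1$ to $p_\pi$. $\mathscr{P}(D,i,k)$ is the set of $T$-paths from $i$ to $k$ with respect to $D$, and $c_p=c_{p_1p_2}c_{p_3p_2}^{-1}c_{p_3p_4}\cdots c_{p_{\pi-1}p_{\pi-2}}^{-1}c_{p_{\pi-1}p_\pi}$. *)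

theory Defs
  imports Main
begin

(* Vertices are elements of a linearly ordered type; a polygon is a finite set of
   at least three vertices, with the cyclic ordering induced by the linear order.
   Subpolygons (subsets) then automatically carry the induced cyclic ordering. *)

definition cyc3 :: "'v::linorder \<Rightarrow> 'v \<Rightarrow> 'v \<Rightarrow> bool" where
  "cyc3 a b c \<longleftrightarrow> (a < b \<and> b < c) \<or> (b < c \<and> c < a) \<or> (c < a \<and> a < b)"

definition cyc4 :: "'v::linorder \<Rightarrow> 'v \<Rightarrow> 'v \<Rightarrow> 'v \<Rightarrow> bool" where
  "cyc4 a b c d \<longleftrightarrow> cyc3 a b c \<and> cyc3 a c d"

definition polygon :: "'v::linorder set \<Rightarrow> bool" where
  "polygon P \<longleftrightarrow> finite P \<and> card P \<ge> 3"

definition diag :: "'v::linorder set \<Rightarrow> ('v \<times> 'v) set" where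
  "diag P = {(i, j). i \<in> P \<and> j \<in> P \<and> i \<noteq> j}"

definition neighbours :: "'v::linorder set \<Rightarrow> 'v \<Rightarrow> 'v \<Rightarrow> bool" where
  "neighbours P i j \<longleftrightarrow> i \<in> P \<and> j \<in> P \<and> i \<noteq> j \<and>
     ((\<forall>w\<in>P. \<not> cyc3 i w j) \<or> (\<forall>w\<in>P. \<not> cyc3 j w i))"

definition internal_diag :: "'v::linorder set \<Rightarrow> ('v \<times> 'v) set" where
  "internal_diag P = {(i, k) \<in> diag P. \<not> neighbours P i k}"

definition crosses :: "'v::linorder \<times> 'v \<Rightarrow> 'v \<times> 'v \<Rightarrow> bool" where
  "crosses d e \<longleftrightarrow> (case d of (i, k) \<Rightarrow> case e of (j, l) \<Rightarrow>
     distinct [i, j, k, l] \<and> (cyc4 i j k l \<or> cyc4 i l k j))"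

definition dissection :: "'v::linorder set \<Rightarrow> ('v \<times> 'v) set \<Rightarrow> bool" where
  "dissection P D \<longleftrightarrow> D \<subseteq> internal_diag P \<and> (\<forall>(i, k)\<in>D. (k, i) \<in> D) \<and>
     (\<forall>d\<in>D. \<forall>e\<in>D. \<not> crosses d e)"

(* vertex sets of the two subpolygons into which the diagonal (t,v) divides P *)
definition side1 :: "'v::linorder set \<Rightarrow> 'v \<Rightarrow> 'v \<Rightarrow> 'v set" where
  "side1 P t v = {w \<in> P. cyc3 t w v} \<union> {t, v}"

definition side2 :: "'v::linorder set \<Rightarrow> 'v \<Rightarrow> 'v \<Rightarrow> 'v set" where
  "side2 P t v = {w \<in> P. cyc3 v w t} \<union> {t, v}"

(* For diagonals d, e both crossing the diagonal ik (and not crossing each other),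
   the crossing point of d with ik lies strictly closer to i than the one of e:
   d and e are different, and the endpoints of e not shared with d lie on the
   same side of d as k. *)
definition cross_before :: "'v::linorder \<times> 'v \<Rightarrow> 'v \<times> 'v \<Rightarrow> 'v \<times> 'v \<Rightarrow> bool" where
  "cross_before ik d e \<longleftrightarrow> {fst e, snd e} \<noteq> {fst d, snd d} \<and>
     (\<forall>x\<in>{fst e, snd e} - {fst d, snd d}.
        cyc3 (fst d) x (snd d) = cyc3 (fst d) (snd ik) (snd d))"

(* T-paths (p_1,...,p_pi), written 0-based: step a joins p!a and p!(a+1);
   the paper's steps (p_{2 alpha}, p_{2 alpha+1}) are the steps with odd a. *)
definition tpath :: "'v::linorder set \<Rightarrow> ('v \<times> 'v) set \<Rightarrow> 'v list \<Rightarrow> bool" where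
  "tpath Q D p \<longleftrightarrow> length p \<ge> 2 \<and> set p \<subseteq> Q \<and> hd p \<noteq> last p \<and>
     (\<forall>a < length p - 1. p ! a \<noteq> p ! (a + 1)) \<and>
     (\<forall>a < length p - 1. \<forall>b < length p - 1. a \<noteq> b \<longrightarrow>
        {p ! a, p ! (a + 1)} \<noteq> {p ! b, p ! (b + 1)}) \<and>
     (\<forall>a < length p - 1. \<forall>d\<in>D. \<not> crosses (p ! a, p ! (a + 1)) d) \<and>
     (\<forall>a < length p - 1. odd a \<longrightarrow>
        (p ! a, p ! (a + 1)) \<in> D \<and> crosses (p ! a, p ! (a + 1)) (hd p, last p)) \<and>
     (\<forall>a b. a < b \<and> b < length p - 1 \<and> odd a \<and> odd b \<longrightarrow>
        cross_before (hd p, last p) (p ! a, p ! (a + 1)) (p ! b, p ! (b + 1)))"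

definition tpaths :: "'v::linorder set \<Rightarrow> ('v \<times> 'v) set \<Rightarrow> 'v \<Rightarrow> 'v \<Rightarrow> 'v list set" where
  "tpaths Q D i k = {p. tpath Q D p \<and> hd p = i \<and> last p = k}"

definition runit :: "'a::{ring, monoid_mult} \<Rightarrow> bool" where
  "runit x \<longleftrightarrow> (\<exists>y. x * y = 1 \<and> y * x = 1)"

definition rinv :: "'a::{ring, monoid_mult} \<Rightarrow> 'a" where
  "rinv x = (THE y. x * y = 1 \<and> y * x = 1)"

definition tweight :: "('v \<Rightarrow> 'v \<Rightarrow> 'a::{ring, monoid_mult}) \<Rightarrow> 'v list \<Rightarrow> 'a" where
  "tweight c p = prod_list (map (\<lambda>a. if even a then c (p ! a) (p ! (a + 1))
                                      else rinv (c (p ! (a + 1)) (p ! a)))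
                                [0..<length p - 1])"

end

theory Submission
  imports Defs
begin


fun st :: "'v list \<Rightarrow> ('v \<times> 'v) list" where
  "st (x # y # r) = (x, y) # st (y # r)"
| "st _ = []"

fun ds :: "'v list \<Rightarrow> ('v \<times> 'v) list" where
  "ds (x # y # z # r) = (y, z) # ds (z # r)"
| "ds _ = []"

definition edg :: "'v \<times> 'v \<Rightarrow> 'v set" where "edg e = {fst e, snd e}"

lemma st_len: "length (st p) = length p - 1"
  by (induction p rule: st.induct) auto

lemma st_nth: "a < length p - 1 \<Longrightarrow> st p ! a = (p ! a, p ! (a + 1))"
proof (induction p arbitrary: a rule: st.induct)
  case (1 x y r)
  then show ?case by (cases a) auto
qed auto

lemma ds_len: "length (ds p) = (length p - 1) div 2"
  by (induction p rule: ds.induct) auto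

lemma ds_nth: "j < (length p - 1) div 2 \<Longrightarrow> ds p ! j = (p ! (2*j+1), p ! (2*j+2))"
proof (induction p arbitrary: j rule: ds.induct)
  case (1 x y z r)
  then show ?case
  proof (cases j)
    case (Suc j')
    with 1 have "ds (z # r) ! j' = ((z#r) ! (2*j'+1), (z#r) ! (2*j'+2))" by auto
    then show ?thesis using Suc by (simp add: numeral_eq_Suc)
  qed auto
qed auto

lemma ds_cons_indep: "ds (x # r) = ds (x' # r)"
proof (cases r)
  case (Cons y r')
  then show ?thesis by (cases r') auto
qed simp

definition tp :: "'v::linorder set \<Rightarrow> ('v \<times> 'v) set \<Rightarrow> 'v \<Rightarrow> 'v \<Rightarrow> 'v list \<Rightarrow> bool" where
  "tp Q D i k p \<longleftrightarrow> length p \<ge> 2 \<and> set p \<subseteq> Q \<and> hd p = i \<and> last p = k \<and> i \<noteq> k \<and>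
     (\<forall>e\<in>set (st p). fst e \<noteq> snd e \<and> (\<forall>d\<in>D. \<not> crosses e d)) \<and>
     distinct (map edg (st p)) \<and>
     (\<forall>e\<in>set (ds p). e \<in> D \<and> crosses e (i, k)) \<and>
     sorted_wrt (cross_before (i, k)) (ds p)"

lemma tpaths_tp: "tpaths Q D i k = {p. tp Q D i k p}"
proof -
  have "tpath Q D p \<and> hd p = i \<and> last p = k \<longleftrightarrow> tp Q D i k p" for p
  proof -
    let ?n = "length p"
    have c1: "((\<forall>a < ?n - 1. p ! a \<noteq> p ! (a + 1)) \<and> (\<forall>a < ?n - 1. \<forall>d\<in>D. \<not> crosses (p ! a, p ! (a + 1)) d))
       \<longleftrightarrow> (\<forall>e\<in>set (st p). fst e \<noteq> snd e \<and> (\<forall>d\<in>D. \<not> crosses e d))"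
    proof
      assume H: "(\<forall>a < ?n - 1. p ! a \<noteq> p ! (a + 1)) \<and> (\<forall>a < ?n - 1. \<forall>d\<in>D. \<not> crosses (p ! a, p ! (a + 1)) d)"
      show "\<forall>e\<in>set (st p). fst e \<noteq> snd e \<and> (\<forall>d\<in>D. \<not> crosses e d)"
      proof
        fix e assume "e \<in> set (st p)"
        then obtain a where "a < ?n - 1" "e = st p ! a" by (auto simp: in_set_conv_nth st_len)
        then show "fst e \<noteq> snd e \<and> (\<forall>d\<in>D. \<not> crosses e d)" using H by (simp add: st_nth)
      qed
    next
      assume H: "\<forall>e\<in>set (st p). fst e \<noteq> snd e \<and> (\<forall>d\<in>D. \<not> crosses e d)"
      have "st p ! a \<in> set (st p)" if "a < ?n - 1" for a using that by (simp add: st_len)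
      then show "(\<forall>a < ?n - 1. p ! a \<noteq> p ! (a + 1)) \<and> (\<forall>a < ?n - 1. \<forall>d\<in>D. \<not> crosses (p ! a, p ! (a + 1)) d)"
        using H by (metis fst_conv snd_conv st_nth)
    qed
    have c2: "(\<forall>a < ?n - 1. \<forall>b < ?n - 1. a \<noteq> b \<longrightarrow> {p ! a, p ! (a + 1)} \<noteq> {p ! b, p ! (b + 1)})
       \<longleftrightarrow> distinct (map edg (st p))"
      by (auto simp: distinct_conv_nth st_len st_nth edg_def)
    have c3: "(\<forall>a < ?n - 1. odd a \<longrightarrow> (p ! a, p ! (a + 1)) \<in> D \<and> crosses (p ! a, p ! (a + 1)) (hd p, last p))
       \<longleftrightarrow> (\<forall>e\<in>set (ds p). e \<in> D \<and> crosses e (hd p, last p))"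
    proof
      assume H: "\<forall>a < ?n - 1. odd a \<longrightarrow> (p ! a, p ! (a + 1)) \<in> D \<and> crosses (p ! a, p ! (a + 1)) (hd p, last p)"
      show "\<forall>e\<in>set (ds p). e \<in> D \<and> crosses e (hd p, last p)"
      proof
        fix e assume "e \<in> set (ds p)"
        then obtain j where j: "j < (?n - 1) div 2" "e = ds p ! j" by (auto simp: in_set_conv_nth ds_len)
        then have "e = (p ! (2*j+1), p ! (2*j+1+1))" by (simp add: ds_nth)
        moreover have "2*j+1 < ?n - 1" "odd (2*j+1)" using j by auto
        ultimately show "e \<in> D \<and> crosses e (hd p, last p)" using H by blast
      qed
    next
      assume H: "\<forall>e\<in>set (ds p). e \<in> D \<and> crosses e (hd p, last p)"
      show "\<forall>a < ?n - 1. odd a \<longrightarrow> (p ! a, p ! (a + 1)) \<in> D \<and> crosses (p ! a, p ! (a + 1)) (hd p, last p)"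
      proof (intro allI impI)
        fix a assume a: "a < ?n - 1" "odd a"
        then obtain j where j: "a = 2*j+1" by (meson oddE)
        then have jl: "j < (?n - 1) div 2" using a by auto
        then have "ds p ! j \<in> set (ds p)" by (simp add: ds_len)
        moreover have "ds p ! j = (p ! a, p ! (a+1))" using jl j by (simp add: ds_nth)
        ultimately show "(p ! a, p ! (a + 1)) \<in> D \<and> crosses (p ! a, p ! (a + 1)) (hd p, last p)"
          using H by metis
      qed
    qed
    have c4: "(\<forall>a b. a < b \<and> b < ?n - 1 \<and> odd a \<and> odd b \<longrightarrow>
        cross_before (hd p, last p) (p ! a, p ! (a + 1)) (p ! b, p ! (b + 1)))
       \<longleftrightarrow> sorted_wrt (cross_before (hd p, last p)) (ds p)"
    proof
      assume H: "\<forall>a b. a < b \<and> b < ?n - 1 \<and> odd a \<and> odd b \<longrightarrow>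
        cross_before (hd p, last p) (p ! a, p ! (a + 1)) (p ! b, p ! (b + 1))"
      show "sorted_wrt (cross_before (hd p, last p)) (ds p)"
        unfolding sorted_wrt_iff_nth_less
      proof (intro allI impI)
        fix x y assume xy0: "x < y" "y < length (ds p)"
        then have xy: "x < y \<and> y < length (ds p)" by simp
        then have "2*x+1 < 2*y+1" "2*y+1 < ?n - 1" by (auto simp: ds_len)
        moreover have "ds p ! x = (p ! (2*x+1), p ! (2*x+1+1))" "ds p ! y = (p ! (2*y+1), p ! (2*y+1+1))"
          using xy by (auto simp: ds_nth ds_len)
        ultimately show "cross_before (hd p, last p) (ds p ! x) (ds p ! y)" using H by simp
      qed
    next
      assume H: "sorted_wrt (cross_before (hd p, last p)) (ds p)"
      show "\<forall>a b. a < b \<and> b < ?n - 1 \<and> odd a \<and> odd b \<longrightarrow>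
        cross_before (hd p, last p) (p ! a, p ! (a + 1)) (p ! b, p ! (b + 1))"
      proof (intro allI impI)
        fix a b assume ab: "a < b \<and> b < ?n - 1 \<and> odd a \<and> odd b"
        then obtain x y where xy: "a = 2*x+1" "b = 2*y+1" by (meson oddE)
        then have l: "x < y" "y < (?n - 1) div 2" using ab by auto
        then have "ds p ! x = (p ! a, p ! (a+1))" "ds p ! y = (p ! b, p ! (b+1))"
          using xy by (auto simp: ds_nth)
        then show "cross_before (hd p, last p) (p ! a, p ! (a + 1)) (p ! b, p ! (b + 1))"
        proof -
          have "\<forall>i j. i < j \<and> j < length (ds p) \<longrightarrow> cross_before (hd p, last p) (ds p ! i) (ds p ! j)"
            using H unfolding sorted_wrt_iff_nth_less by blast
          then show ?thesis using l \<open>ds p ! x = _\<close> \<open>ds p ! y = _\<close> by (metis ds_len)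
        qed
      qed
    qed
    show ?thesis
      unfolding tpath_def tp_def using c1 c2 c3 c4 by auto
  qed
  then show ?thesis unfolding tpaths_def by auto
qed



lemma ds_sub_st: "set (ds p) \<subseteq> set (st p)"
  by (induction p rule: ds.induct) auto

lemma st_ends: "e \<in> set (st p) \<Longrightarrow> fst e \<in> set p \<and> snd e \<in> set p"
  by (induction p rule: st.induct) auto

lemma ds_ends: "e \<in> set (ds p) \<Longrightarrow> fst e \<in> set (tl p) \<and> snd e \<in> set (tl p)"
  by (induction p rule: ds.induct) auto

lemma tl_ends: "p \<noteq> [] \<Longrightarrow> set (tl p) \<subseteq> fst ` set (ds p) \<union> snd ` set (ds p) \<union> {last p}"
proof (induction p rule: ds.induct)
  case (1 x y z r)
  then show ?case by (cases r) auto
qed auto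

lemma later_side:
  assumes "sorted_wrt (cross_before ik) (ds (x # y # z # r))" "last (z # r) = snd ik"
    "u \<in> set r" "u \<noteq> snd ik" "u \<noteq> y" "u \<noteq> z"
  shows "cyc3 y u z = cyc3 y (snd ik) z"
proof -
  have "u \<in> set (tl (z # r))" using assms(3) by simp
  then have "u \<in> fst ` set (ds (z # r)) \<union> snd ` set (ds (z # r))"
    using tl_ends[of "z # r"] assms(2,4) by auto
  then obtain e where e: "e \<in> set (ds (z # r))" "u = fst e \<or> u = snd e" by auto
  have "cross_before ik (y, z) e" using assms(1) e(1) by simp
  then show ?thesis unfolding cross_before_def using e(2) assms(5,6) by auto
qed

lemma cb_snd: "cross_before (x, k) = cross_before (y, k)"
  unfolding cross_before_def[abs_def] by simp

lemma crosses_distinct: "crosses (a, b) (x, y) \<Longrightarrow> a \<noteq> b \<and> a \<noteq> x \<and> a \<noteq> y \<and> b \<noteq> x \<and> b \<noteq> y \<and> x \<noteq> y"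
  unfolding crosses_def by auto

lemma crosses_side: "crosses (a, b) (x, y) \<Longrightarrow> cyc3 a x b \<noteq> cyc3 a y b"
  unfolding crosses_def cyc4_def cyc3_def apply simp by (smt (z3) less_trans not_less_iff_gr_or_eq less_asym)

lemma crosses_sym: "crosses d e \<Longrightarrow> crosses e d"
  unfolding crosses_def cyc4_def cyc3_def apply (cases d; cases e) apply simp by (smt (z3) less_trans not_less_iff_gr_or_eq less_asym)

lemma crosses_swap1: "crosses (b, a) e = crosses (a, b) e"
  unfolding crosses_def cyc4_def cyc3_def apply (cases e) apply simp by (smt (z3) less_trans not_less_iff_gr_or_eq less_asym)

lemma crosses_swap2: "crosses d (y, x) = crosses d (x, y)"
  unfolding crosses_def cyc4_def cyc3_def apply (cases d) apply simp by (smt (z3) less_trans not_less_iff_gr_or_eq less_asym)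

lemma tp_hd_notin:
  assumes "tp Q E x k (x # r)"
  shows "x \<notin> set r"
proof (cases r)
  case Nil then show ?thesis by simp
next
  case (Cons w r1)
  show ?thesis
  proof (cases r1)
    case Nil then show ?thesis using assms Cons unfolding tp_def by auto
  next
    case (Cons u r')
    have p: "x # r = x # w # u # r'" using Cons \<open>r = w # r1\<close> by simp
    have wu: "(w, u) \<in> set (ds (x # r))" using p by simp
    then have cr: "crosses (w, u) (x, k)" using assms unfolding tp_def by auto
    then have d: "w \<noteq> x" "u \<noteq> x" "x \<noteq> k" using crosses_distinct by blast+
    have sd: "cyc3 w x u \<noteq> cyc3 w k u" using crosses_side[OF cr] .
    have so: "sorted_wrt (cross_before (x, k)) (ds (x # w # u # r'))"
      using assms p unfolding tp_def by simp
    have la: "last (u # r') = snd (x, k)" using assms p unfolding tp_def by simp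
    have "x \<notin> set r'"
      using later_side[OF so la, of x] d sd by auto
    then show ?thesis using p d by auto
  qed
qed

lemma tp_finite:
  assumes "finite Q"
  shows "finite {p. tp Q D i k p}"
proof -
  have "{p. tp Q D i k p} \<subseteq> {p. set p \<subseteq> Q \<and> length p \<le> card (Pow Q) + 1}"
  proof
    fix p assume "p \<in> {p. tp Q D i k p}"
    then have H: "tp Q D i k p" by simp
    then have s: "set p \<subseteq> Q" unfolding tp_def by auto
    have "set (map edg (st p)) \<subseteq> Pow Q"
      using H st_ends unfolding tp_def edg_def by fastforce
    then have "card (set (map edg (st p))) \<le> card (Pow Q)"
      using assms by (simp add: card_mono)
    moreover have "card (set (map edg (st p))) = length (st p)"
      using H unfolding tp_def by (metis distinct_card length_map)
    ultimately have "length p \<le> card (Pow Q) + 1" by (simp add: st_len)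
    then show "p \<in> {p. set p \<subseteq> Q \<and> length p \<le> card (Pow Q) + 1}" using s by simp
  qed
  moreover have "finite {p. set p \<subseteq> Q \<and> length p \<le> card (Pow Q) + 1}"
    using finite_lists_length_le[OF assms] by simp
  ultimately show ?thesis by (rule finite_subset)
qed

lemma tweight2: "tweight c [x, y] = c x y"
  unfolding tweight_def by simp

lemma tweight_cons2: "tweight c (x # y # z # r) = c x y * rinv (c z y) * tweight c (z # r)"
proof -
  have u: "[0..<Suc (Suc (length r))] = 0 # 1 # map (\<lambda>a. Suc (Suc a)) [0..<length r]"
  proof -
    have "map (\<lambda>a. Suc (Suc a)) [0..<length r] = [2..<length r + 2]"
      using map_add_upt[of 2 "length r"] by simp
    then show ?thesis by (simp add: upt_conv_Cons numeral_2_eq_2 del: upt_Suc)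
  qed
  have n1: "(x#y#z#r) ! (Suc (Suc a)) = (z#r) ! a" for a by simp
  have n2: "(x#y#z#r) ! (Suc (Suc a) + 1) = (z#r) ! (a + 1)" for a by simp
  show ?thesis unfolding tweight_def
    apply (simp only: length_Cons diff_Suc_1 u)
    apply (simp add: o_def mult.assoc del: upt_Suc)
    apply (intro arg_cong2[where f=times] refl arg_cong[where f=prod_list] map_cong)
    by (simp add: nth_Cons')
qed

lemma runit_inv: "runit x \<Longrightarrow> x * rinv x = 1 \<and> rinv x * x = 1"
proof -
  assume "runit x"
  then obtain y where y: "x * y = 1" "y * x = 1" unfolding runit_def by blast
  have "\<exists>!y. x * y = 1 \<and> y * x = 1"
  proof (rule ex1I[of _ y])
    show "x * y = 1 \<and> y * x = 1" using y by simp
    fix z assume "x * z = 1 \<and> z * x = 1"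
    then have "z = z * (x * y)" using y by simp
    also have "\<dots> = (z * x) * y" by (simp add: mult.assoc)
    also have "\<dots> = y" using \<open>x * z = 1 \<and> z * x = 1\<close> by simp
    finally show "z = y" .
  qed
  then show ?thesis unfolding rinv_def by (rule theI')
qed



locale splitl =
  fixes Q S :: "'v::linorder set" and D D2 :: "('v \<times> 'v) set" and a b i k :: 'v
  assumes SQ: "S \<subseteq> Q" and aS: "a \<in> S" and bS: "b \<in> S" and ab: "a \<noteq> b"
    and iQ: "i \<in> Q" and iS: "i \<notin> S" and kS: "k \<in> S" and ka: "k \<noteq> a" and kb: "k \<noteq> b"
    and Ddef: "D = {(a, b), (b, a)} \<union> D2" and abD2: "(a, b) \<notin> D2" and baD2: "(b, a) \<notin> D2"
    and D2S: "D2 \<subseteq> S \<times> S"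
    and nc_ab: "\<And>x y. x \<in> S \<Longrightarrow> y \<in> S \<Longrightarrow> \<not> crosses (x, y) (a, b)"
    and nc_ia: "\<And>x y. x \<in> S \<Longrightarrow> y \<in> S \<Longrightarrow> \<not> crosses (i, a) (x, y)"
    and cr: "crosses (a, b) (i, k)"
    and g4: "\<And>x y. x \<in> S \<Longrightarrow> y \<in> S \<Longrightarrow> x \<noteq> b \<Longrightarrow> y \<noteq> b \<Longrightarrow>
               crosses (x, y) (i, k) = crosses (x, y) (b, k)"
    and g6: "\<And>x. x \<in> S \<Longrightarrow> x \<noteq> a \<Longrightarrow> x \<noteq> b \<Longrightarrow> cyc3 a x b = cyc3 a k b"
    and g7: "\<And>y. y \<in> S \<Longrightarrow> y \<noteq> a \<Longrightarrow> y \<noteq> b \<Longrightarrow> cyc3 a b y = cyc3 a i y"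
begin

lemma DS: "D \<subseteq> S \<times> S" using Ddef D2S aS bS by auto

lemma nc_ab2: "x \<in> S \<Longrightarrow> y \<in> S \<Longrightarrow> \<not> crosses (x, y) (b, a) \<and> \<not> crosses (x, y) (a, b)
   \<and> \<not> crosses (a, b) (x, y) \<and> \<not> crosses (b, a) (x, y)"
  using nc_ab crosses_swap2 crosses_sym crosses_swap1 by metis

lemma nc_ia2: "d \<in> D \<Longrightarrow> \<not> crosses (i, a) d"
proof -
  assume d: "d \<in> D"
  show ?thesis
  proof (cases "d \<in> D2")
    case True then show ?thesis using D2S nc_ia by (cases d) auto
  next
    case False then have "d = (a, b) \<or> d = (b, a)" using d Ddef by auto
    then show ?thesis using crosses_distinct by (metis crosses_sym)
  qed
qed

lemma nc_S: "x \<in> S \<Longrightarrow> y \<in> S \<Longrightarrow> \<forall>d\<in>D2. \<not> crosses (x, y) d \<Longrightarrow> \<forall>d\<in>D. \<not> crosses (x, y) d"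
  using Ddef nc_ab2 by auto

lemma fwd_S:
  assumes "tp Q D i k p" shows "set (tl p) \<subseteq> S"
proof -
  have "p \<noteq> []" "last p = k" "\<forall>e\<in>set (ds p). e \<in> D" using assms unfolding tp_def by auto
  then show ?thesis using tl_ends[of p] DS kS by fastforce
qed

lemma edg_eq: "edg e = {x, y} \<Longrightarrow> x = fst e \<or> x = snd e"
  unfolding edg_def by auto

lemma fwdA:
  assumes H: "tp Q D i k (i # a # b # r)"
  shows "tp S D2 b k (b # r) \<and> (b # r) ! 1 \<noteq> a"
proof -
  let ?p = "i # a # b # r"
  have stp: "st ?p = (i, a) # (a, b) # st (b # r)" by simp
  have dsp: "ds ?p = (a, b) # ds (b # r)" by simp
  have lst: "last ?p = k" using H unfolding tp_def by simp
  then have rne: "r \<noteq> []" using kb by auto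
  then have lst2: "last (b # r) = k" using lst by simp
  have setS: "set (b # r) \<subseteq> S" using fwd_S[OF H] by simp
  have dist: "distinct (map edg (st ?p))" using H unfolding tp_def by simp
  then have dist2: "distinct (map edg (st (b # r)))" and abnot: "edg (a, b) \<notin> edg ` set (st (b # r))"
    by auto
  have stc: "\<forall>e\<in>set (st (b # r)). fst e \<noteq> snd e \<and> (\<forall>d\<in>D. \<not> crosses e d)"
    using H unfolding tp_def by simp
  have dsD: "\<forall>e\<in>set (ds (b # r)). e \<in> D \<and> crosses e (i, k)" using H unfolding tp_def by simp
  have so: "sorted_wrt (cross_before (i, k)) (ds (b # r))" using H unfolding tp_def by simp
  obtain w r1 where r: "r = w # r1" using rne by (cases r) auto
  have bnot: "b \<notin> set r"
  proof (cases r1)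
    case Nil then show ?thesis using r lst2 kb by auto
  next
    case (Cons u r')
    have wu: "(w, u) \<in> set (ds (b # r))" using r Cons by simp
    then have wuD: "(w, u) \<in> D" and wuc: "crosses (w, u) (i, k)" using dsD by auto
    have "w \<noteq> b" using stc r by auto
    moreover have "u \<noteq> b"
    proof
      assume "u = b"
      then have "st (b # r) = (b, w) # (w, b) # st (b # r')" using r Cons by simp
      then show False using dist2 by (auto simp: edg_def insert_commute)
    qed
    moreover have "w \<in> S" "u \<in> S" using wuD DS by auto
    ultimately have c2: "crosses (w, u) (b, k)" using g4 wuc by blast
    have sd: "cyc3 w b u \<noteq> cyc3 w k u" using crosses_side[OF c2] .
    have so2: "sorted_wrt (cross_before (i, k)) (ds (b # w # u # r'))" using so r Cons by simp
    have la: "last (u # r') = snd (i, k)" using lst2 r Cons by simp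
    have "b \<notin> set r'" using later_side[OF so2 la, of b] sd \<open>w \<noteq> b\<close> \<open>u \<noteq> b\<close> kb by auto
    then show ?thesis using r Cons \<open>w \<noteq> b\<close> \<open>u \<noteq> b\<close> by auto
  qed
  have dsD2: "\<forall>e\<in>set (ds (b # r)). e \<in> D2 \<and> crosses e (b, k)"
  proof
    fix e assume e: "e \<in> set (ds (b # r))"
    then have en: "fst e \<noteq> b" "snd e \<noteq> b" using ds_ends[OF e] bnot by auto
    have eD: "e \<in> D" and ec: "crosses e (i, k)" using dsD e by auto
    then have "e \<in> D2" using Ddef en by auto
    moreover have "fst e \<in> S" "snd e \<in> S" using eD DS by auto
    ultimately show "e \<in> D2 \<and> crosses e (b, k)" using g4[of "fst e" "snd e"] en ec by simp
  qed
  have len: "length (b # r) \<ge> 2" using rne by (cases r) auto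
  have "tp S D2 b k (b # r)"
    unfolding tp_def using len setS lst2 kb stc dist2 dsD2 so cb_snd[of i k b] Ddef by auto
  moreover have "(b # r) ! 1 \<noteq> a"
  proof
    assume "(b # r) ! 1 = a"
    then have "w = a" using r by simp
    then have "(b, a) \<in> set (st (b # r))" using r by (cases r1) auto
    then show False using abnot by (force simp: edg_def insert_commute)
  qed
  ultimately show ?thesis by simp
qed

lemma fwdB:
  assumes H: "tp Q D i k (i # a # y # r)" and yb: "y \<noteq> b"
  shows "tp S D2 b k (b # a # y # r)"
proof -
  let ?p = "i # a # y # r"
  let ?q = "b # a # y # r"
  have lst: "last ?p = k" using H unfolding tp_def by simp
  have setS: "set (a # y # r) \<subseteq> S" using fwd_S[OF H] by simp
  have dist: "distinct (map edg (st ?p))" using H unfolding tp_def by simp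
  have stc: "\<forall>e\<in>set (st ?p). fst e \<noteq> snd e \<and> (\<forall>d\<in>D. \<not> crosses e d)"
    using H unfolding tp_def by simp
  have dsD: "\<forall>e\<in>set (ds ?p). e \<in> D \<and> crosses e (i, k)" using H unfolding tp_def by simp
  have so: "sorted_wrt (cross_before (i, k)) (ds ?p)" using H unfolding tp_def by simp
  have ay: "(a, y) \<in> D" "crosses (a, y) (i, k)" using dsD by auto
  have yS: "y \<in> S" using setS by simp
  have ya: "y \<noteq> a" using stc by auto
  have bnot: "b \<notin> set r"
  proof
    assume br: "b \<in> set r"
    have la: "last (y # r) = snd (i, k)" using lst by simp
    have "cyc3 a b y = cyc3 a k y" using later_side[OF so la br] kb ab yb by auto
    moreover have "cyc3 a b y = cyc3 a i y" using g7[OF yS ya yb] .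
    moreover have "cyc3 a i y \<noteq> cyc3 a k y" using crosses_side[OF ay(2)] .
    ultimately show False by simp
  qed
  have dseq: "ds ?q = ds ?p" using ds_cons_indep by metis
  have dsD2: "\<forall>e\<in>set (ds ?q). e \<in> D2 \<and> crosses e (b, k)"
  proof
    fix e assume e0: "e \<in> set (ds ?q)"
    then have e: "e \<in> set (ds ?p)" using dseq by simp
    have en: "fst e \<noteq> b \<and> snd e \<noteq> b"
    proof (cases "e = (a, y)")
      case True then show ?thesis using ab yb by simp
    next
      case False
      then have "e \<in> set (ds (y # r))" using e by simp
      then show ?thesis using ds_ends[of e "y # r"] bnot by auto
    qed
    have eD: "e \<in> D" and ec: "crosses e (i, k)" using dsD e by auto
    then have "e \<in> D2" using Ddef en by auto
    moreover have "fst e \<in> S" "snd e \<in> S" using eD DS by auto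
    ultimately show "e \<in> D2 \<and> crosses e (b, k)" using g4[of "fst e" "snd e"] en ec by simp
  qed
  have stq: "st ?q = (b, a) # st (a # y # r)" by simp
  have stp: "st ?p = (i, a) # st (a # y # r)" by simp
  have bnot2: "b \<notin> set (a # y # r)" using bnot ab yb by auto
  have "edg (b, a) \<notin> edg ` set (st (a # y # r))"
  proof
    assume "edg (b, a) \<in> edg ` set (st (a # y # r))"
    then obtain e where e: "e \<in> set (st (a # y # r))" "edg e = {b, a}" by (metis edg_def fst_conv snd_conv imageE)
    then have "b = fst e \<or> b = snd e" using edg_eq by metis
    then show False using st_ends[OF e(1)] bnot2 by auto
  qed
  then have dist2: "distinct (map edg (st ?q))" using dist stq stp by simp
  have stc2: "\<forall>e\<in>set (st ?q). fst e \<noteq> snd e \<and> (\<forall>d\<in>D2. \<not> crosses e d)"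
  proof
    fix e assume "e \<in> set (st ?q)"
    then have "e = (b, a) \<or> e \<in> set (st (a # y # r))" by simp
    then show "fst e \<noteq> snd e \<and> (\<forall>d\<in>D2. \<not> crosses e d)"
    proof
      assume "e = (b, a)"
      then show ?thesis using ab D2S nc_ab2 by fastforce
    next
      assume "e \<in> set (st (a # y # r))"
      then show ?thesis using stc Ddef by auto
    qed
  qed
  have len: "length ?q \<ge> 2" by simp
  show ?thesis
    unfolding tp_def using len setS bS lst kb stc2 dist2 dsD2 so dseq cb_snd[of i k b] by auto
qed

lemma bwdA:
  assumes H: "tp S D2 b k q" and q1: "q ! 1 \<noteq> a"
  shows "tp Q D i k (i # a # q)"
proof -
  have qne: "q \<noteq> []" "hd q = b" using H unfolding tp_def by auto
  then obtain r where q: "q = b # r" by (cases q) auto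
  have lst: "last q = k" using H unfolding tp_def by simp
  then have rne: "r \<noteq> []" using q kb by auto
  then obtain w r1 where r: "r = w # r1" by (cases r) auto
  have wa: "w \<noteq> a" using q1 q r by simp
  have bnot: "b \<notin> set r" using tp_hd_notin H q by metis
  have setq: "set q \<subseteq> S" using H unfolding tp_def by simp
  have stq: "\<forall>e\<in>set (st q). fst e \<noteq> snd e \<and> (\<forall>d\<in>D2. \<not> crosses e d)"
    using H unfolding tp_def by simp
  have distq: "distinct (map edg (st q))" using H unfolding tp_def by simp
  have dsq: "\<forall>e\<in>set (ds q). e \<in> D2 \<and> crosses e (b, k)" using H unfolding tp_def by simp
  have soq: "sorted_wrt (cross_before (b, k)) (ds q)" using H unfolding tp_def by simp
  let ?p = "i # a # q"
  have stp: "st ?p = (i, a) # (a, b) # st q" using q by simp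
  have dsp: "ds ?p = (a, b) # ds q" using q by simp
  have stc: "\<forall>e\<in>set (st ?p). fst e \<noteq> snd e \<and> (\<forall>d\<in>D. \<not> crosses e d)"
  proof
    fix e assume "e \<in> set (st ?p)"
    then have "e = (i, a) \<or> e = (a, b) \<or> e \<in> set (st q)" using stp by simp
    then show "fst e \<noteq> snd e \<and> (\<forall>d\<in>D. \<not> crosses e d)"
    proof (elim disjE)
      assume "e = (i, a)" then show ?thesis using nc_ia2 iS aS by auto
    next
      assume e: "e = (a, b)"
      have "\<forall>d\<in>D. \<not> crosses (a, b) d"
      proof
        fix d assume "d \<in> D"
        then have "d \<in> D2 \<or> d = (a, b) \<or> d = (b, a)" using Ddef by auto
        then show "\<not> crosses (a, b) d" using D2S nc_ab2 crosses_distinct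
          by (metis (no_types, lifting) SigmaE subsetD)
      qed
      then show ?thesis using e ab by simp
    next
      assume e: "e \<in> set (st q)"
      then have "fst e \<in> S" "snd e \<in> S" using st_ends[OF e] setq by auto
      then show ?thesis using nc_S[of "fst e" "snd e"] stq e by auto
    qed
  qed
  have endsS: "\<And>e. e \<in> set (st q) \<Longrightarrow> fst e \<in> S \<and> snd e \<in> S" using st_ends setq by blast
  have e1: "edg (i, a) \<notin> edg ` set (st q)"
  proof
    assume "edg (i, a) \<in> edg ` set (st q)"
    then obtain e where e: "e \<in> set (st q)" "edg e = {i, a}" by (metis edg_def fst_conv snd_conv imageE)
    then have "i = fst e \<or> i = snd e" using edg_eq by metis
    then show False using endsS[OF e(1)] iS by auto
  qed
  have e2: "edg (a, b) \<notin> edg ` set (st q)"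
  proof
    assume "edg (a, b) \<in> edg ` set (st q)"
    then obtain e where e: "e \<in> set (st q)" "edg e = {b, a}" by (metis edg_def fst_conv snd_conv imageE insert_commute)
    have "st q = (b, w) # st r" using q r by simp
    then have "e = (b, w) \<or> e \<in> set (st r)" using e by simp
    then show False
    proof
      assume "e = (b, w)" then show False using e(2) wa ab by (auto simp: edg_def doubleton_eq_iff)
    next
      assume er: "e \<in> set (st r)"
      have "b = fst e \<or> b = snd e" using e(2) edg_eq by metis
      then show False using st_ends[OF er] bnot by auto
    qed
  qed
  have e3: "edg (i, a) \<noteq> edg (a, b)" using iS bS by (auto simp: edg_def doubleton_eq_iff)
  have dist: "distinct (map edg (st ?p))" using stp distq e1 e2 e3 by simp
  have dsD: "\<forall>e\<in>set (ds ?p). e \<in> D \<and> crosses e (i, k)"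
  proof
    fix e assume "e \<in> set (ds ?p)"
    then have "e = (a, b) \<or> e \<in> set (ds q)" using dsp by simp
    then show "e \<in> D \<and> crosses e (i, k)"
    proof
      assume "e = (a, b)" then show ?thesis using Ddef cr by simp
    next
      assume e: "e \<in> set (ds q)"
      have en: "fst e \<noteq> b" "snd e \<noteq> b" using ds_ends[OF e] bnot q by auto
      have eD2: "e \<in> D2" "crosses e (b, k)" using dsq e by auto
      then have "fst e \<in> S" "snd e \<in> S" using D2S by auto
      then have "crosses e (i, k)" using g4[of "fst e" "snd e"] en eD2 by simp
      then show ?thesis using eD2 Ddef by auto
    qed
  qed
  have cb1: "\<forall>e\<in>set (ds q). cross_before (i, k) (a, b) e"
  proof
    fix e assume e: "e \<in> set (ds q)"
    have eD2: "e \<in> D2" using dsq e by auto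
    then have eS: "fst e \<in> S" "snd e \<in> S" using D2S by auto
    have "{fst e, snd e} \<noteq> {fst (a, b), snd (a, b)}"
    proof
      assume "{fst e, snd e} = {fst (a, b), snd (a, b)}"
      then have "e = (a, b) \<or> e = (b, a)" by (cases e) (auto simp: doubleton_eq_iff)
      then show False using eD2 abD2 baD2 by auto
    qed
    moreover have "\<forall>x\<in>{fst e, snd e} - {fst (a, b), snd (a, b)}.
        cyc3 (fst (a, b)) x (snd (a, b)) = cyc3 (fst (a, b)) (snd (i, k)) (snd (a, b))"
      using g6 eS by auto
    ultimately show "cross_before (i, k) (a, b) e" unfolding cross_before_def by blast
  qed
  have so: "sorted_wrt (cross_before (i, k)) (ds ?p)"
    using dsp cb1 soq cb_snd[of i k b] by simp
  have len: "length ?p \<ge> 2" by simp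
  show ?thesis
    unfolding tp_def using len iQ aS SQ setq lst q stc dist dsD so iS kS by auto
qed

lemma bwdB:
  assumes H: "tp S D2 b k (b # a # r)"
  shows "tp Q D i k (i # a # r)"
proof -
  let ?q = "b # a # r"
  let ?p = "i # a # r"
  have bnot: "b \<notin> set (a # r)" using tp_hd_notin H by metis
  have lst: "last ?q = k" using H unfolding tp_def by simp
  have setq: "set ?q \<subseteq> S" using H unfolding tp_def by simp
  have stq: "\<forall>e\<in>set (st ?q). fst e \<noteq> snd e \<and> (\<forall>d\<in>D2. \<not> crosses e d)"
    using H unfolding tp_def by simp
  have distq: "distinct (map edg (st ?q))" using H unfolding tp_def by simp
  have dsq: "\<forall>e\<in>set (ds ?q). e \<in> D2 \<and> crosses e (b, k)" using H unfolding tp_def by simp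
  have soq: "sorted_wrt (cross_before (b, k)) (ds ?q)" using H unfolding tp_def by simp
  have stp: "st ?p = (i, a) # st (a # r)" by (cases r) auto
  have stq': "st ?q = (b, a) # st (a # r)" by (cases r) auto
  have dseq: "ds ?p = ds ?q" using ds_cons_indep by metis
  have rne: "r \<noteq> []" using lst ka by auto
  have stc: "\<forall>e\<in>set (st ?p). fst e \<noteq> snd e \<and> (\<forall>d\<in>D. \<not> crosses e d)"
  proof
    fix e assume "e \<in> set (st ?p)"
    then have "e = (i, a) \<or> e \<in> set (st (a # r))" using stp by simp
    then show "fst e \<noteq> snd e \<and> (\<forall>d\<in>D. \<not> crosses e d)"
    proof
      assume "e = (i, a)" then show ?thesis using nc_ia2 iS aS by auto
    next
      assume e: "e \<in> set (st (a # r))"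
      then have "fst e \<in> S" "snd e \<in> S" using st_ends setq by fastforce+
      then show ?thesis using nc_S[of "fst e" "snd e"] stq e stq' by auto
    qed
  qed
  have e1: "edg (i, a) \<notin> edg ` set (st (a # r))"
  proof
    assume "edg (i, a) \<in> edg ` set (st (a # r))"
    then obtain e where e: "e \<in> set (st (a # r))" "edg e = {i, a}" by (metis edg_def fst_conv snd_conv imageE)
    then have "i = fst e \<or> i = snd e" using edg_eq by metis
    then show False using st_ends[OF e(1)] setq iS by auto
  qed
  have dist: "distinct (map edg (st ?p))" using stp stq' distq e1 by simp
  have dsD: "\<forall>e\<in>set (ds ?p). e \<in> D \<and> crosses e (i, k)"
  proof
    fix e assume e0: "e \<in> set (ds ?p)"
    then have e: "e \<in> set (ds ?q)" using dseq by simp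
    have en: "fst e \<noteq> b" "snd e \<noteq> b" using ds_ends[OF e] bnot by auto
    have eD2: "e \<in> D2" "crosses e (b, k)" using dsq e by auto
    then have "fst e \<in> S" "snd e \<in> S" using D2S by auto
    then have "crosses e (i, k)" using g4[of "fst e" "snd e"] en eD2 by simp
    then show "e \<in> D \<and> crosses e (i, k)" using eD2 Ddef by auto
  qed
  have so: "sorted_wrt (cross_before (i, k)) (ds ?p)"
    using dseq soq cb_snd[of i k b] by simp
  have len: "length ?p \<ge> 2" by simp
  show ?thesis
    unfolding tp_def using len iQ aS SQ setq lst rne stc dist dsD so iS kS by auto
qed

lemma q_shape:
  assumes "tp S D2 b k q" shows "\<exists>r. q = b # r \<and> r \<noteq> []"
proof -
  have "q \<noteq> []" "hd q = b" "length q \<ge> 2" using assms unfolding tp_def by auto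
  then show ?thesis by (cases q) auto
qed

lemma sum_split:
  fixes c :: "'v \<Rightarrow> 'v \<Rightarrow> 'a::{ring, monoid_mult}"
  assumes u: "runit (c b a)"
  shows "(\<Sum>p\<in>{p. tp Q D i k p \<and> p ! 1 = a}. tweight c p)
       = c i a * rinv (c b a) * (\<Sum>q\<in>{q. tp S D2 b k q}. tweight c q)"
proof -
  define g where "g q = (if q ! 1 = a then i # tl q else i # a # q)" for q
  let ?T2 = "{q. tp S D2 b k q}"
  let ?Ta = "{p. tp Q D i k p \<and> p ! 1 = a}"
  have inj: "inj_on g ?T2"
  proof
    fix q1 q2 assume q1: "q1 \<in> ?T2" and q2: "q2 \<in> ?T2" and eq: "g q1 = g q2"
    obtain r1 where r1: "q1 = b # r1" "r1 \<noteq> []" using q_shape q1 by blast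
    obtain r2 where r2: "q2 = b # r2" "r2 \<noteq> []" using q_shape q2 by blast
    have bad: False if "tp S D2 b k (b # a # b # r)" for r
    proof -
      have "(a, b) \<in> set (ds (b # a # b # r))" by simp
      then show False using that abD2 unfolding tp_def by blast
    qed
    show "q1 = q2"
    proof (cases "q1 ! 1 = a"; cases "q2 ! 1 = a")
      assume "q1 ! 1 = a" "q2 ! 1 = a"
      then show ?thesis using eq r1 r2 unfolding g_def by simp
    next
      assume "q1 ! 1 \<noteq> a" "q2 ! 1 \<noteq> a"
      then show ?thesis using eq unfolding g_def by simp
    next
      assume "q1 ! 1 = a" "q2 ! 1 \<noteq> a"
      then have "r1 = a # q2" using eq r1 unfolding g_def by simp
      then show ?thesis using bad[of r2] q1 r1 r2 by simp
    next
      assume "q1 ! 1 \<noteq> a" "q2 ! 1 = a"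
      then have "r2 = a # q1" using eq r2 unfolding g_def by simp
      then show ?thesis using bad[of r1] q2 r1 r2 by simp
    qed
  qed
  have img: "g ` ?T2 = ?Ta"
  proof
    show "g ` ?T2 \<subseteq> ?Ta"
    proof
      fix p assume "p \<in> g ` ?T2"
      then obtain q where q: "tp S D2 b k q" "p = g q" by auto
      obtain r where r: "q = b # r" "r \<noteq> []" using q_shape q(1) by blast
      show "p \<in> ?Ta"
      proof (cases "q ! 1 = a")
        case True
        then obtain r' where "r = a # r'" using r by (cases r) auto
        then show ?thesis using bwdB q r True unfolding g_def by simp
      next
        case False
        then show ?thesis using bwdA q unfolding g_def by simp
      qed
    qed
    show "?Ta \<subseteq> g ` ?T2"
    proof
      fix p assume "p \<in> ?Ta"
      then have H: "tp Q D i k p" and p1: "p ! 1 = a" by auto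
      have "p \<noteq> []" "hd p = i" "length p \<ge> 2" "last p = k" using H unfolding tp_def by auto
      then have pp1: "p = i # tl p" by (cases p) auto
      have pp2: "tl p \<noteq> []" using \<open>length p \<ge> 2\<close> by (cases p) auto
      note pp = pp1 pp2
      then obtain r0 where "p = i # r0" "r0 \<noteq> []" by blast
      then obtain r1 where p: "p = i # a # r1" using p1 by (cases r0) auto
      then have "r1 \<noteq> []" using \<open>last p = k\<close> ka by auto
      then obtain y r where r1: "r1 = y # r" by (cases r1) auto
      show "p \<in> g ` ?T2"
      proof (cases "y = b")
        case True
        then have "tp S D2 b k (b # r) \<and> (b # r) ! 1 \<noteq> a" using fwdA H p r1 by simp
        moreover have "g (b # r) = p" using calculation p r1 True unfolding g_def by simp
        ultimately show ?thesis by force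
      next
        case False
        then have "tp S D2 b k (b # a # y # r)" using fwdB H p r1 by simp
        moreover have "g (b # a # y # r) = p" using p r1 unfolding g_def by simp
        ultimately show ?thesis by force
      qed
    qed
  qed
  have bij: "bij_betw g ?T2 ?Ta" using inj img unfolding bij_betw_def by simp
  have w: "tweight c (g q) = c i a * rinv (c b a) * tweight c q" if q: "q \<in> ?T2" for q
  proof -
    obtain r where r: "q = b # r" "r \<noteq> []" using q_shape q by blast
    show ?thesis
    proof (cases "q ! 1 = a")
      case True
      then obtain r' where r': "r = a # r'" using r by (cases r) auto
      have "r' \<noteq> []"
      proof
        assume "r' = []"
        then have "last q = a" using r r' by simp
        then show False using q ka unfolding tp_def by simp
      qed
      then obtain y r'' where r'': "r' = y # r''" by (cases r') auto
      have "tweight c (g q) = c i a * rinv (c y a) * tweight c (y # r'')"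
        using True r r' r'' unfolding g_def by (simp add: tweight_cons2)
      moreover have "tweight c q = c b a * rinv (c y a) * tweight c (y # r'')"
        using r r' r'' by (simp add: tweight_cons2)
      moreover have "rinv (c b a) * c b a = 1" using runit_inv[OF u] by simp
      ultimately show ?thesis by (metis mult.assoc mult_1)
    next
      case False
      then show ?thesis using r unfolding g_def by (simp add: tweight_cons2)
    qed
  qed
  have "(\<Sum>p\<in>?Ta. tweight c p) = (\<Sum>q\<in>?T2. tweight c (g q))"
    using sum.reindex_bij_betw[OF bij, of "tweight c"] by simp
  also have "\<dots> = (\<Sum>q\<in>?T2. c i a * rinv (c b a) * tweight c q)"
    using w by (rule sum.cong[OF refl])
  also have "\<dots> = c i a * rinv (c b a) * (\<Sum>q\<in>?T2. tweight c q)"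
    by (simp add: sum_distrib_left)
  finally show ?thesis .
qed

end


lemma cb_pair: "cross_before ik (d1,d2) (e1,e2) \<longleftrightarrow> \<not>((e1=d1\<and>e2=d2) \<or> (e1=d2\<and>e2=d1)) \<and>
   (e1 \<noteq> d1 \<and> e1 \<noteq> d2 \<longrightarrow> cyc3 d1 e1 d2 = cyc3 d1 (snd ik) d2) \<and>
   (e2 \<noteq> d1 \<and> e2 \<noteq> d2 \<longrightarrow> cyc3 d1 e2 d2 = cyc3 d1 (snd ik) d2)"
  unfolding cross_before_def by (auto simp: doubleton_eq_iff)

lemma cb_sym0:
  fixes d1 d2 e1 e2 i k :: "'v::linorder"
  assumes "crosses (d1,d2) (i,k)" "crosses (e1,e2) (i,k)" "\<not> crosses (d1,d2) (e1,e2)"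
   "cross_before (i,k) (d1,d2) (e1,e2)"
  shows "cross_before (k,i) (e2,e1) (d2,d1)"
  using assms unfolding crosses_def cb_pair cyc4_def cyc3_def
  apply simp
  by (smt (z3) less_trans not_less_iff_gr_or_eq less_asym)

lemma cb_sym:
  assumes "crosses d (i,k)" "crosses e (i,k)" "\<not> crosses d e" "cross_before (i,k) d e"
  shows "cross_before (k,i) (prod.swap e) (prod.swap d)"
  using cb_sym0[of "fst d" "snd d" i k "fst e" "snd e"] assms by (cases d; cases e) auto

lemma crosses_rev: "crosses (a, b) (i, k) \<Longrightarrow> crosses (b, a) (k, i)"
  using crosses_swap1 crosses_swap2 by metis

lemma st_rev: "st (rev p) = rev (map prod.swap (st p))"
proof (rule nth_equalityI)
  show "length (st (rev p)) = length (rev (map prod.swap (st p)))" by (simp add: st_len)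
  fix a assume "a < length (st (rev p))"
  then have a: "a < length p - 1" by (simp add: st_len)
  then show "st (rev p) ! a = rev (map prod.swap (st p)) ! a"
    by (simp add: st_nth rev_nth st_len Suc_diff_Suc)
qed

lemma ds_rev:
  assumes "even (length p)"
  shows "ds (rev p) = rev (map prod.swap (ds p))"
proof (cases "length p")
  case 0 then show ?thesis by simp
next
  case (Suc n1)
  obtain t where t: "length p = 2 * t" using assms by (auto elim: evenE)
  then have "t > 0" using Suc by simp
  then obtain m where n: "length p = 2 * m + 2" using t by (intro that[of "t - 1"]) simp
  show ?thesis
  proof (rule nth_equalityI)
    show "length (ds (rev p)) = length (rev (map prod.swap (ds p)))" by (simp add: ds_len)
    fix j assume "j < length (ds (rev p))"
    then have j: "j < m" using n by (simp add: ds_len)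
    have l1: "ds (rev p) ! j = (rev p ! (2*j+1), rev p ! (2*j+2))"
      using j n by (simp add: ds_nth)
    have l2: "rev (map prod.swap (ds p)) ! j = prod.swap (ds p ! (m - 1 - j))"
      using j n by (simp add: rev_nth ds_len Suc_diff_Suc)
    have l3: "ds p ! (m - 1 - j) = (p ! (2*(m-1-j)+1), p ! (2*(m-1-j)+2))"
      using j n by (simp add: ds_nth)
    have i1: "length p - Suc (2*j+1) = 2*(m-1-j)+2" "length p - Suc (2*j+2) = 2*(m-1-j)+1"
      using j n by simp_all
    have "rev p ! (2*j+1) = p ! (length p - Suc (2*j+1))" "rev p ! (2*j+2) = p ! (length p - Suc (2*j+2))"
      using j n by (simp_all add: rev_nth)
    then have "rev p ! (2*j+1) = p ! (2*(m-1-j)+2)" "rev p ! (2*j+2) = p ! (2*(m-1-j)+1)"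
      using i1 by simp_all
    then show "ds (rev p) ! j = rev (map prod.swap (ds p)) ! j"
      using l1 l2 l3 by simp
  qed
qed

lemma tp_even:
  assumes "tp Q D i k p" shows "even (length p)"
proof (rule ccontr)
  assume o: "\<not> even (length p)"
  have l: "length p \<ge> 2" using assms unfolding tp_def by simp
  obtain t where t: "length p = 2 * t + 1" using o by (auto elim: oddE)
  then have "t > 0" using l by simp
  then obtain m where n: "length p = 2 * m + 3" using t by (intro that[of "t - 1"]) simp
  have jm: "m < (length p - 1) div 2" using n by simp
  then have "ds p ! m \<in> set (ds p)" by (simp add: ds_len)
  moreover have "ds p ! m = (p ! (2*m+1), p ! (2*m+2))" using jm by (simp add: ds_nth)
  moreover have "p ! (2*m+2) = k"
  proof -
    have "p \<noteq> []" using n by auto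
    then have "last p = p ! (length p - 1)" by (rule last_conv_nth)
    then show ?thesis using assms n unfolding tp_def by simp
  qed
  ultimately have "crosses (p ! (2*m+1), k) (i, k)" using assms unfolding tp_def by auto
  then show False using crosses_distinct by blast
qed

lemma tp_rev:
  assumes H: "tp Q D i k p" and sym: "\<forall>(x, y)\<in>D. (y, x) \<in> D"
    and nc: "\<forall>d\<in>D. \<forall>e\<in>D. \<not> crosses d e"
  shows "tp Q D k i (rev p)"
proof -
  have ev: "even (length p)" using tp_even[OF H] .
  have ne: "p \<noteq> []" using H unfolding tp_def by auto
  have sw: "edg \<circ> prod.swap = edg" by (auto simp: edg_def fun_eq_iff)
  have stc: "\<forall>e\<in>set (st (rev p)). fst e \<noteq> snd e \<and> (\<forall>d\<in>D. \<not> crosses e d)"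
  proof
    fix e assume "e \<in> set (st (rev p))"
    then obtain e' where e': "e' \<in> set (st p)" "e = prod.swap e'" unfolding st_rev by auto
    have "fst e' \<noteq> snd e' \<and> (\<forall>d\<in>D. \<not> crosses e' d)" using H e'(1) unfolding tp_def by auto
    then show "fst e \<noteq> snd e \<and> (\<forall>d\<in>D. \<not> crosses e d)"
      using e'(2) crosses_swap1[of "snd e'" "fst e'"] by (cases e') auto
  qed
  have dist: "distinct (map edg (st (rev p)))"
    using H unfolding tp_def st_rev by (simp add: rev_map[symmetric] sw)
  have dsc: "\<forall>e\<in>set (ds (rev p)). e \<in> D \<and> crosses e (k, i)"
    using H sym crosses_rev unfolding tp_def ds_rev[OF ev] by fastforce
  have so0: "sorted_wrt (cross_before (i, k)) (ds p)" and dsD: "\<forall>e\<in>set (ds p). e \<in> D \<and> crosses e (i, k)"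
    using H unfolding tp_def by auto
  have "sorted_wrt (\<lambda>x y. cross_before (k, i) (prod.swap y) (prod.swap x)) (ds p)"
    using so0 by (rule sorted_wrt_mono_rel[rotated]) (use dsD nc cb_sym in blast)
  then have so: "sorted_wrt (cross_before (k, i)) (ds (rev p))"
    unfolding ds_rev[OF ev] by (simp add: sorted_wrt_rev sorted_wrt_map)
  show ?thesis
    using H stc dist dsc so ne unfolding tp_def by (auto simp: hd_rev last_rev)
qed

lemma sum_rev:
  assumes sym: "\<forall>(x, y)\<in>D. (y, x) \<in> D" and nc: "\<forall>d\<in>D. \<forall>e\<in>D. \<not> crosses d e"
  shows "(\<Sum>p\<in>{p. tp Q D i k p}. f p) = (\<Sum>p\<in>{p. tp Q D k i p}. f (rev p))"
proof -
  have "bij_betw rev {p. tp Q D k i p} {p. tp Q D i k p}"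
  proof (rule bij_betw_byWitness[where f'=rev])
    show "\<forall>a\<in>{p. tp Q D k i p}. rev (rev a) = a" by simp
    show "\<forall>a'\<in>{p. tp Q D i k p}. rev (rev a') = a'" by simp
    show "rev ` {p. tp Q D k i p} \<subseteq> {p. tp Q D i k p}" using tp_rev[OF _ sym nc] by auto
    show "rev ` {p. tp Q D i k p} \<subseteq> {p. tp Q D k i p}" using tp_rev[OF _ sym nc] by auto
  qed
  then show ?thesis using sum.reindex_bij_betw[of rev "{p. tp Q D k i p}" "{p. tp Q D i k p}" f] by simp
qed



datatype 'a opp = Opp (unopp: 'a)

lemma opp_eq_iff: "x = y \<longleftrightarrow> unopp x = unopp y"
  by (cases x; cases y) auto

instantiation opp :: ("{ring, monoid_mult}") "{ring, monoid_mult}"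
begin
definition "0 = Opp 0"
definition "1 = Opp 1"
definition "x + y = Opp (unopp x + unopp y)"
definition "x - y = Opp (unopp x - unopp y)"
definition "- x = Opp (- unopp x)"
definition "x * y = Opp (unopp y * unopp x)"
instance
  by standard (simp_all add: opp_eq_iff zero_opp_def one_opp_def plus_opp_def minus_opp_def
      uminus_opp_def times_opp_def algebra_simps mult.assoc)
end

lemma unopp_simps [simp]: "unopp 0 = 0" "unopp 1 = 1" "unopp (x + y) = unopp x + unopp y"
  "unopp (x * y) = unopp y * unopp x"
  by (simp_all add: zero_opp_def one_opp_def plus_opp_def times_opp_def)

lemma unopp_sum: "unopp (sum f A) = (\<Sum>x\<in>A. unopp (f x))"
proof (cases "finite A")
  case True then show ?thesis by (induction A rule: finite_induct) auto
qed simp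

lemma unopp_prod_list: "unopp (prod_list xs) = prod_list (rev (map unopp xs))"
  by (induction xs) auto

lemma rinv_unique:
  fixes x y :: "'a::{ring, monoid_mult}"
  assumes "x * y = 1" "y * x = 1" shows "rinv x = y"
proof -
  have r: "runit x" using assms unfolding runit_def by blast
  have "rinv x = rinv x * (x * y)" using assms by simp
  also have "\<dots> = (rinv x * x) * y" by (simp add: mult.assoc)
  also have "\<dots> = y" using runit_inv[OF r] by simp
  finally show ?thesis .
qed

lemma runit_opp: "runit x \<Longrightarrow> runit (Opp x)"
proof -
  assume "runit x"
  then obtain y where "x * y = 1" "y * x = 1" unfolding runit_def by blast
  then have "Opp x * Opp y = 1 \<and> Opp y * Opp x = 1" by (simp add: opp_eq_iff)
  then show ?thesis unfolding runit_def by blast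
qed

lemma rinv_opp: "runit x \<Longrightarrow> rinv (Opp x) = Opp (rinv x)"
  by (rule rinv_unique) (simp_all add: opp_eq_iff runit_inv)

lemma rev_map_upt: "rev (map f [0..<m]) = map (\<lambda>a. f (m - 1 - a)) [0..<m]"
  by (rule nth_equalityI) (auto simp: rev_nth)

lemma tweight_rev:
  fixes c :: "'v \<Rightarrow> 'v \<Rightarrow> 'a::{ring, monoid_mult}"
  assumes ev: "even (length p)"
    and u: "\<And>a. a < length p - 1 \<Longrightarrow> odd a \<Longrightarrow> runit (c (p ! a) (p ! (a + 1)))"
  shows "tweight c (rev p) = unopp (tweight (\<lambda>x y. Opp (c y x)) p)"
proof -
  let ?n = "length p"
  define F where "F a = (if even a then Opp (c (p ! (a + 1)) (p ! a))
                         else rinv (Opp (c (p ! a) (p ! (a + 1)))))" for a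
  have "tweight (\<lambda>x y. Opp (c y x)) p = prod_list (map F [0..<?n - 1])"
    unfolding tweight_def F_def by simp
  then have "unopp (tweight (\<lambda>x y. Opp (c y x)) p) = prod_list (map (\<lambda>a. unopp (F (?n - 1 - 1 - a))) [0..<?n - 1])"
    by (simp add: unopp_prod_list rev_map[symmetric] rev_map_upt)
  also have "\<dots> = tweight c (rev p)"
    unfolding tweight_def length_rev
  proof (intro arg_cong[where f=prod_list] map_cong refl)
    fix a assume "a \<in> set [0..<?n - 1]"
    then have a: "a < ?n - 1" by simp
    define b where "b = ?n - 2 - a"
    have par: "even a = even b" using ev a unfolding b_def by (auto elim!: evenE)
    have "length p - Suc a = b + 1" using a unfolding b_def by simp
    then have r1: "rev p ! a = p ! (b + 1)" using a by (simp add: rev_nth)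
    have r2: "rev p ! (a + 1) = p ! b" using a unfolding b_def by (simp add: rev_nth)
    have bl: "b < ?n - 1" using a unfolding b_def by simp
    have "?n - 1 - 1 - a = b" unfolding b_def by simp
    then show "unopp (F (?n - 1 - 1 - a)) = (if even a then c (rev p ! a) (rev p ! (a + 1))
              else rinv (c (rev p ! (a + 1)) (rev p ! a)))"
      using par r1 r2 u[OF bl] unfolding F_def by (simp add: rinv_opp)
  qed
  finally show ?thesis by simp
qed




lemma geo_iS: "cyc3 t i v \<Longrightarrow> \<not> cyc3 v i t \<and> i \<noteq> t \<and> i \<noteq> v"
  unfolding crosses_def cyc4_def cyc3_def by (simp?; smt (z3) less_trans not_less_iff_gr_or_eq less_asym)

lemma geo_nc: "t \<noteq> v \<Longrightarrow> x = t \<or> x = v \<or> cyc3 v x t \<Longrightarrow> y = t \<or> y = v \<or> cyc3 v y t \<Longrightarrow>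
   \<not> crosses (x, y) (t, v)"
  unfolding crosses_def cyc4_def cyc3_def by (simp?; smt (z3) less_trans not_less_iff_gr_or_eq less_asym)

lemma geo_nc_i: "cyc3 t i v \<Longrightarrow> x = t \<or> x = v \<or> cyc3 v x t \<Longrightarrow> y = t \<or> y = v \<or> cyc3 v y t \<Longrightarrow>
   \<not> crosses (i, t) (x, y) \<and> \<not> crosses (i, v) (x, y)"
  unfolding crosses_def cyc4_def cyc3_def by (simp?; smt (z3) less_trans not_less_iff_gr_or_eq less_asym)

lemma geo_cr: "cyc3 t i v \<Longrightarrow> cyc3 v k t \<Longrightarrow> crosses (t, v) (i, k)"
  unfolding crosses_def cyc4_def cyc3_def by (simp?; smt (z3) less_trans not_less_iff_gr_or_eq less_asym)

lemma geo_g4t: "cyc3 t i v \<Longrightarrow> cyc3 v k t \<Longrightarrow> x = t \<or> x = v \<or> cyc3 v x t \<Longrightarrow> y = t \<or> y = v \<or> cyc3 v y t \<Longrightarrow>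
   x \<noteq> t \<Longrightarrow> y \<noteq> t \<Longrightarrow> crosses (x, y) (i, k) = crosses (x, y) (t, k)"
  unfolding crosses_def cyc4_def cyc3_def by (simp?; smt (z3) less_trans not_less_iff_gr_or_eq less_asym)

lemma geo_g4v: "cyc3 t i v \<Longrightarrow> cyc3 v k t \<Longrightarrow> x = t \<or> x = v \<or> cyc3 v x t \<Longrightarrow> y = t \<or> y = v \<or> cyc3 v y t \<Longrightarrow>
   x \<noteq> v \<Longrightarrow> y \<noteq> v \<Longrightarrow> crosses (x, y) (i, k) = crosses (x, y) (v, k)"
  unfolding crosses_def cyc4_def cyc3_def by (simp?; smt (z3) less_trans not_less_iff_gr_or_eq less_asym)

lemma geo_g6: "cyc3 v k t \<Longrightarrow> cyc3 v x t \<Longrightarrow> cyc3 t x v = cyc3 t k v \<and> cyc3 v x t = cyc3 v k t"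
  unfolding crosses_def cyc4_def cyc3_def by (simp?; smt (z3) less_trans not_less_iff_gr_or_eq less_asym)

lemma geo_g7: "cyc3 t i v \<Longrightarrow> cyc3 v y t \<Longrightarrow> cyc3 t v y = cyc3 t i y \<and> cyc3 v t y = cyc3 v i y"
  unfolding crosses_def cyc4_def cyc3_def by (simp?; smt (z3) less_trans not_less_iff_gr_or_eq less_asym)

lemma geo_class: "cyc3 t i v \<Longrightarrow> cyc3 v x t \<Longrightarrow> crosses (i, x) (t, v)"
  unfolding crosses_def cyc4_def cyc3_def by (simp?; smt (z3) less_trans not_less_iff_gr_or_eq less_asym)



lemma basic_facts:
  assumes "dissection P {(t, v), (v, t)}" "dissection (side2 P t v) D2"
  shows "t \<in> P" "v \<in> P" "t \<noteq> v" "D2 \<subseteq> side2 P t v \<times> side2 P t v"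
    "side2 P t v \<subseteq> P" "t \<in> side2 P t v" "v \<in> side2 P t v"
    "\<And>x. x \<in> side2 P t v \<Longrightarrow> x = t \<or> x = v \<or> cyc3 v x t"
    "\<forall>(x, y)\<in>D2. (y, x) \<in> D2" "\<forall>d\<in>D2. \<forall>e\<in>D2. \<not> crosses d e"
proof -
  have "(t, v) \<in> internal_diag P" using assms(1) unfolding dissection_def by auto
  then show tP: "t \<in> P" and vP: "v \<in> P" and "t \<noteq> v" unfolding internal_diag_def diag_def by auto
  have "D2 \<subseteq> internal_diag (side2 P t v)" using assms(2) unfolding dissection_def by auto
  then show "D2 \<subseteq> side2 P t v \<times> side2 P t v" unfolding internal_diag_def diag_def by auto
  show "side2 P t v \<subseteq> P" using tP vP unfolding side2_def by auto
  show "t \<in> side2 P t v" "v \<in> side2 P t v" unfolding side2_def by auto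
  show "\<And>x. x \<in> side2 P t v \<Longrightarrow> x = t \<or> x = v \<or> cyc3 v x t" unfolding side2_def by auto
  show "\<forall>(x, y)\<in>D2. (y, x) \<in> D2" "\<forall>d\<in>D2. \<forall>e\<in>D2. \<not> crosses d e"
    using assms(2) unfolding dissection_def by auto
qed

lemma part1:
  fixes P :: "'v::linorder set" and t v :: 'v
    and D D2 :: "('v \<times> 'v) set"
    and c :: "'v \<Rightarrow> 'v \<Rightarrow> 'a::{ring, monoid_mult}"
  assumes "polygon P"
    and dP: "dissection P {(t, v), (v, t)}"
    and dS: "dissection (side2 P t v) D2"
    and dis: "{(t, v), (v, t)} \<inter> D2 = {}"
    and Dd: "D = {(t, v), (v, t)} \<union> D2"
    and un: "\<forall>(r, s)\<in>D. runit (c r s)"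
    and i: "i \<in> side1 P t v - {t, v}" and k: "k \<in> side2 P t v - {t, v}"
  shows "(\<Sum>p\<in>{p. tp P D i k p}. tweight c p)
      = c i t * rinv (c v t) * (\<Sum>q\<in>{q. tp (side2 P t v) D2 v k q}. tweight c q)
      + c i v * rinv (c t v) * (\<Sum>q\<in>{q. tp (side2 P t v) D2 t k q}. tweight c q)"
proof -
  let ?S = "side2 P t v"
  note bf = basic_facts[OF dP dS]
  have finP: "finite P" using assms(1) unfolding polygon_def by simp
  have ci: "cyc3 t i v" and iP: "i \<in> P" using i unfolding side1_def by auto
  have ck: "cyc3 v k t" and kP: "k \<in> P" using k unfolding side2_def by auto
  have iS: "i \<notin> ?S" using bf(8)[of i] geo_iS[OF ci] by auto
  have kS: "k \<in> ?S" using k by simp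
  have Sm: "\<And>x. x \<in> ?S \<Longrightarrow> x = t \<or> x = v \<or> cyc3 v x t" using bf(8) .
  interpret A: splitl P ?S D D2 t v i k
  proof
    show "?S \<subseteq> P" using bf(5) .
    show "t \<in> ?S" using bf(6) .
    show "v \<in> ?S" using bf(7) .
    show "i \<in> P" using iP .
    show "i \<notin> ?S" using iS .
    show "k \<in> ?S" using kS .
    show "D2 \<subseteq> ?S \<times> ?S" using bf(4) .
    show "t \<noteq> v" using bf(3) .
    show "k \<noteq> t" "k \<noteq> v" using k by auto
    show "D = {(t, v), (v, t)} \<union> D2" using Dd .
    show "(t, v) \<notin> D2" "(v, t) \<notin> D2" using dis by auto
    show "\<And>x y. x \<in> ?S \<Longrightarrow> y \<in> ?S \<Longrightarrow> \<not> crosses (x, y) (t, v)"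
      by (rule geo_nc[OF bf(3) Sm Sm])
    show "\<And>x y. x \<in> ?S \<Longrightarrow> y \<in> ?S \<Longrightarrow> \<not> crosses (i, t) (x, y)"
      using geo_nc_i[OF ci Sm Sm] by simp
    show "crosses (t, v) (i, k)" by (rule geo_cr[OF ci ck])
    show "\<And>x y. x \<in> ?S \<Longrightarrow> y \<in> ?S \<Longrightarrow> x \<noteq> v \<Longrightarrow> y \<noteq> v \<Longrightarrow>
               crosses (x, y) (i, k) = crosses (x, y) (v, k)"
      by (rule geo_g4v[OF ci ck Sm Sm])
    show "\<And>x. x \<in> ?S \<Longrightarrow> x \<noteq> t \<Longrightarrow> x \<noteq> v \<Longrightarrow> cyc3 t x v = cyc3 t k v"
    proof -
      fix x assume "x \<in> ?S" "x \<noteq> t" "x \<noteq> v"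
      then have "cyc3 v x t" using Sm[of x] by simp
      show "cyc3 t x v = cyc3 t k v" using geo_g6[OF ck \<open>cyc3 v x t\<close>] by (rule conjunct1)
    qed
    show "\<And>y. y \<in> ?S \<Longrightarrow> y \<noteq> t \<Longrightarrow> y \<noteq> v \<Longrightarrow> cyc3 t v y = cyc3 t i y"
    proof -
      fix y assume "y \<in> ?S" "y \<noteq> t" "y \<noteq> v"
      then have "cyc3 v y t" using Sm[of y] by simp
      show "cyc3 t v y = cyc3 t i y" using geo_g7[OF ci \<open>cyc3 v y t\<close>] by (rule conjunct1)
    qed
  qed
  interpret B: splitl P ?S D D2 v t i k
  proof
    show "?S \<subseteq> P" using bf(5) .
    show "t \<in> ?S" using bf(6) .
    show "v \<in> ?S" using bf(7) .
    show "i \<in> P" using iP .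
    show "i \<notin> ?S" using iS .
    show "k \<in> ?S" using kS .
    show "D2 \<subseteq> ?S \<times> ?S" using bf(4) .
    show "v \<noteq> t" using bf(3) by simp
    show "k \<noteq> t" "k \<noteq> v" using k by auto
    show "D = {(v, t), (t, v)} \<union> D2" using Dd by auto
    show "(t, v) \<notin> D2" "(v, t) \<notin> D2" using dis by auto
    show "\<And>x y. x \<in> ?S \<Longrightarrow> y \<in> ?S \<Longrightarrow> \<not> crosses (x, y) (v, t)"
      using geo_nc[OF bf(3) Sm Sm] crosses_swap2 by metis
    show "\<And>x y. x \<in> ?S \<Longrightarrow> y \<in> ?S \<Longrightarrow> \<not> crosses (i, v) (x, y)"
      using geo_nc_i[OF ci Sm Sm] by simp
    show "crosses (v, t) (i, k)" using geo_cr[OF ci ck] crosses_swap1 by metis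
    show "\<And>x y. x \<in> ?S \<Longrightarrow> y \<in> ?S \<Longrightarrow> x \<noteq> t \<Longrightarrow> y \<noteq> t \<Longrightarrow>
               crosses (x, y) (i, k) = crosses (x, y) (t, k)"
      by (rule geo_g4t[OF ci ck Sm Sm])
    show "\<And>x. x \<in> ?S \<Longrightarrow> x \<noteq> v \<Longrightarrow> x \<noteq> t \<Longrightarrow> cyc3 v x t = cyc3 v k t"
    proof -
      fix x assume "x \<in> ?S" "x \<noteq> t" "x \<noteq> v"
      then have "cyc3 v x t" using Sm[of x] by simp
      then show "cyc3 v x t = cyc3 v k t" using ck by simp
    qed
    show "\<And>y. y \<in> ?S \<Longrightarrow> y \<noteq> v \<Longrightarrow> y \<noteq> t \<Longrightarrow> cyc3 v t y = cyc3 v i y"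
    proof -
      fix y assume "y \<in> ?S" "y \<noteq> t" "y \<noteq> v"
      then have "cyc3 v y t" using Sm[of y] by simp
      show "cyc3 v t y = cyc3 v i y" using geo_g7[OF ci \<open>cyc3 v y t\<close>] by (rule conjunct2)
    qed
  qed
  have pcls: "p ! 1 = t \<or> p ! 1 = v" if H: "tp P D i k p" for p
  proof -
    have "p \<noteq> []" "hd p = i" "length p \<ge> 2" "last p = k" using H unfolding tp_def by auto
    then obtain x r where p: "p = i # x # r" by (cases p; cases "tl p") auto
    have tvD: "(t, v) \<in> D" using Dd by simp
    have stc: "\<forall>e\<in>set (st p). fst e \<noteq> snd e \<and> (\<forall>d\<in>D. \<not> crosses e d)" using H unfolding tp_def by simp
    show ?thesis
    proof (cases r)
      case Nil
      then have "x = k" using p \<open>last p = k\<close> by simp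
      then have "\<not> crosses (i, k) (t, v)" using stc p Nil tvD by auto
      then show ?thesis using geo_class[OF ci ck] by simp
    next
      case (Cons y r')
      then have "(x, y) \<in> D" using H p unfolding tp_def by auto
      then have "x \<in> ?S" using A.DS by auto
      moreover have "\<not> crosses (i, x) (t, v)" using stc p tvD by auto
      ultimately show ?thesis using p Sm[of x] geo_class[OF ci, of x] by auto
    qed
  qed
  have split: "{p. tp P D i k p} = {p. tp P D i k p \<and> p ! 1 = t} \<union> {p. tp P D i k p \<and> p ! 1 = v}"
    using pcls by auto
  have fin: "finite {p. tp P D i k p}" using tp_finite[OF finP] .
  have "(\<Sum>p\<in>{p. tp P D i k p}. tweight c p)
      = (\<Sum>p\<in>{p. tp P D i k p \<and> p ! 1 = t}. tweight c p) + (\<Sum>p\<in>{p. tp P D i k p \<and> p ! 1 = v}. tweight c p)"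
    by (subst split, rule sum.union_disjoint) (use fin bf(3) in auto)
  also have "\<dots> = c i t * rinv (c v t) * (\<Sum>q\<in>{q. tp ?S D2 v k q}. tweight c q)
      + c i v * rinv (c t v) * (\<Sum>q\<in>{q. tp ?S D2 t k q}. tweight c q)"
    using A.sum_split[of c] B.sum_split[of c] un Dd by auto
  finally show ?thesis .
qed

lemma wrev:
  fixes c :: "'v::linorder \<Rightarrow> 'v \<Rightarrow> 'a::{ring, monoid_mult}"
  assumes H: "tp Q E x y p" and u: "\<forall>(r, s)\<in>E. runit (c r s)"
  shows "tweight c (rev p) = unopp (tweight (\<lambda>x y. Opp (c y x)) p)"
proof (rule tweight_rev)
  show "even (length p)" using tp_even[OF H] .
  fix a assume a: "a < length p - 1" "odd a"
  then obtain j where j: "a = 2 * j + 1" by (meson oddE)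
  then have jl: "j < (length p - 1) div 2" using a by auto
  then have "ds p ! j \<in> set (ds p)" by (simp add: ds_len)
  moreover have "ds p ! j = (p ! a, p ! (a + 1))" using jl j by (simp add: ds_nth)
  ultimately have "(p ! a, p ! (a + 1)) \<in> E" using H unfolding tp_def by auto
  then show "runit (c (p ! a) (p ! (a + 1)))" using u by auto
qed

theorem lemma2p7:
  fixes P :: "'v::linorder set" and t v :: 'v
    and D D2 :: "('v \<times> 'v) set"
    and c :: "'v \<Rightarrow> 'v \<Rightarrow> 'a::{ring, monoid_mult}"
  assumes "polygon P"
    and "dissection P {(t, v), (v, t)}"
    and "dissection (side2 P t v) D2"
    and "{(t, v), (v, t)} \<inter> D2 = {}"
    and "D = {(t, v), (v, t)} \<union> D2"
    and "\<forall>(r, s)\<in>D. runit (c r s)"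
  shows "(\<forall>i\<in>side1 P t v - {t, v}. \<forall>k\<in>side2 P t v - {t, v}.
            (\<Sum>p\<in>tpaths P D i k. tweight c p)
          = c i t * rinv (c v t) * (\<Sum>q\<in>tpaths (side2 P t v) D2 v k. tweight c q)
            + c i v * rinv (c t v) * (\<Sum>q\<in>tpaths (side2 P t v) D2 t k. tweight c q))
       \<and> (\<forall>i\<in>side2 P t v - {t, v}. \<forall>k\<in>side1 P t v - {t, v}.
            (\<Sum>p\<in>tpaths P D i k. tweight c p)
          = (\<Sum>q\<in>tpaths (side2 P t v) D2 i t. tweight c q) * rinv (c v t) * c v k
            + (\<Sum>q\<in>tpaths (side2 P t v) D2 i v. tweight c q) * rinv (c t v) * c t k)"
proof -
  let ?S = "side2 P t v"
  note bf = basic_facts[OF assms(2,3)]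
  have Dd: "D = {(t, v), (v, t)} \<union> D2" using assms(5) .
  have un: "\<forall>(r, s)\<in>D. runit (c r s)" using assms(6) .
  have Dsym: "\<forall>(x, y)\<in>D. (y, x) \<in> D" using Dd bf(9) by auto
  have ncS: "\<not> crosses d (t, v) \<and> \<not> crosses d (v, t) \<and> \<not> crosses (t, v) d \<and> \<not> crosses (v, t) d"
    if "d \<in> D2" for d
  proof -
    obtain x y where d: "d = (x, y)" by (cases d)
    have "x \<in> ?S" "y \<in> ?S" using that d bf(4) by auto
    then have "\<not> crosses (x, y) (t, v)" using geo_nc[OF bf(3) bf(8) bf(8)] by blast
    then show ?thesis using d crosses_swap2 crosses_sym crosses_swap1 by metis
  qed
  have Dnc: "\<forall>d\<in>D. \<forall>e\<in>D. \<not> crosses d e"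
  proof (intro ballI)
    fix d e assume d: "d \<in> D" and e: "e \<in> D"
    show "\<not> crosses d e"
    proof (cases "d \<in> D2")
      case True
      show ?thesis
      proof (cases "e \<in> D2")
        case True then show ?thesis using \<open>d \<in> D2\<close> bf(10) by blast
      next
        case False then have "e = (t, v) \<or> e = (v, t)" using e Dd by auto
        then show ?thesis using ncS[OF \<open>d \<in> D2\<close>] by auto
      qed
    next
      case False then have dd: "d = (t, v) \<or> d = (v, t)" using d Dd by auto
      show ?thesis
      proof (cases "e \<in> D2")
        case True then show ?thesis using ncS[OF True] dd by auto
      next
        case False then have "e = (t, v) \<or> e = (v, t)" using e Dd by auto
        then show ?thesis using dd crosses_distinct by (metis)
      qed
    qed
  qed
  have part_one: "\<forall>i\<in>side1 P t v - {t, v}. \<forall>k\<in>side2 P t v - {t, v}.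
            (\<Sum>p\<in>tpaths P D i k. tweight c p)
          = c i t * rinv (c v t) * (\<Sum>q\<in>tpaths (side2 P t v) D2 v k. tweight c q)
            + c i v * rinv (c t v) * (\<Sum>q\<in>tpaths (side2 P t v) D2 t k. tweight c q)"
    unfolding tpaths_tp using part1[OF assms(1-6)] by blast
  have part_two: "\<forall>i\<in>side2 P t v - {t, v}. \<forall>k\<in>side1 P t v - {t, v}.
            (\<Sum>p\<in>tpaths P D i k. tweight c p)
          = (\<Sum>q\<in>tpaths (side2 P t v) D2 i t. tweight c q) * rinv (c v t) * c v k
            + (\<Sum>q\<in>tpaths (side2 P t v) D2 i v. tweight c q) * rinv (c t v) * c t k"
  proof (intro ballI)
    fix i k assume i: "i \<in> ?S - {t, v}" and k: "k \<in> side1 P t v - {t, v}"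
    define c' where "c' = (\<lambda>x y. Opp (c y x))"
    have un': "\<forall>(r, s)\<in>D. runit (c' r s)"
      using un Dsym runit_opp unfolding c'_def by fastforce
    have P1: "(\<Sum>p\<in>{p. tp P D k i p}. tweight c' p)
      = c' k t * rinv (c' v t) * (\<Sum>q\<in>{q. tp ?S D2 v i q}. tweight c' q)
      + c' k v * rinv (c' t v) * (\<Sum>q\<in>{q. tp ?S D2 t i q}. tweight c' q)"
      using part1[OF assms(1-5) un' k i] .
    have uD2: "\<forall>(r, s)\<in>D2. runit (c r s)" using un Dd by auto
    have S2: "(\<Sum>q\<in>{q. tp ?S D2 i x q}. tweight c q) = unopp (\<Sum>q\<in>{q. tp ?S D2 x i q}. tweight c' q)"
      for x
    proof -
      have "(\<Sum>q\<in>{q. tp ?S D2 i x q}. tweight c q) = (\<Sum>q\<in>{q. tp ?S D2 x i q}. tweight c (rev q))"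
        using sum_rev[OF bf(9) bf(10)] .
      also have "\<dots> = (\<Sum>q\<in>{q. tp ?S D2 x i q}. unopp (tweight c' q))"
        using wrev[OF _ uD2] unfolding c'_def by (intro sum.cong) auto
      finally show ?thesis by (simp add: unopp_sum)
    qed
    have "(\<Sum>p\<in>{p. tp P D i k p}. tweight c p) = (\<Sum>p\<in>{p. tp P D k i p}. tweight c (rev p))"
      using sum_rev[OF Dsym Dnc] .
    also have "\<dots> = (\<Sum>p\<in>{p. tp P D k i p}. unopp (tweight c' p))"
      using wrev[OF _ un] unfolding c'_def by (intro sum.cong) auto
    also have "\<dots> = unopp (\<Sum>p\<in>{p. tp P D k i p}. tweight c' p)" by (simp add: unopp_sum)
    also have "\<dots> = unopp (\<Sum>q\<in>{q. tp ?S D2 v i q}. tweight c' q) * unopp (rinv (c' v t)) * c t k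
       + unopp (\<Sum>q\<in>{q. tp ?S D2 t i q}. tweight c' q) * unopp (rinv (c' t v)) * c v k"
      unfolding P1 by (simp add: c'_def mult.assoc)
    also have "\<dots> = (\<Sum>q\<in>{q. tp ?S D2 i v q}. tweight c q) * rinv (c t v) * c t k
       + (\<Sum>q\<in>{q. tp ?S D2 i t q}. tweight c q) * rinv (c v t) * c v k"
    proof -
      have "unopp (rinv (c' v t)) = rinv (c t v)" "unopp (rinv (c' t v)) = rinv (c v t)"
      proof -
        have "runit (c t v)" "runit (c v t)" using un Dd by auto
        then show "unopp (rinv (c' v t)) = rinv (c t v)" "unopp (rinv (c' t v)) = rinv (c v t)"
          unfolding c'_def by (simp_all add: rinv_opp)
      qed
      then show ?thesis using S2[of v] S2[of t] by simp
    qed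
    finally show "(\<Sum>p\<in>tpaths P D i k. tweight c p)
          = (\<Sum>q\<in>tpaths ?S D2 i t. tweight c q) * rinv (c v t) * c v k
            + (\<Sum>q\<in>tpaths ?S D2 i v. tweight c q) * rinv (c t v) * c t k"
      unfolding tpaths_tp by (simp add: add.commute)
  qed
  show ?thesis using part_one part_two by blast
qed


end
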